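(* Let $p\neq q$ be primes, $G_1$ a finite abelian group of order $p^e$ and $G_2$ a finite abelian group of order $q^f$. Let $R_i=\mathbf{Z}[G_i]$, $S_i$ the integral closure of $R_i$ in $\mathbf{Q}[G_i]$, and $I_i$ the conductor of $S_i$ into $R_i$. Then the conductor of $S_1\otimes S_2$ into $R_1\otimes R_2\cong\mathbf{Z}[G_1\times G_2]$ is $I_1\otimes I_2$.
   Context: For a commutative ring $S$ with subring $R$, the conductor of $S$ into $R$ is $\{s\in S: sS\subseteq R\}$, the largest ideal of $S$ contained in $R$. Tensor products are over $\mathbf{Z}$; all groups involved are free abelian, so $I_1\otimes I_2\subseteq R_1\otimes R_2\subseteq S_1\otimes S_2$. *)

theory Defs
  imports Complex_Main "HOL-Library.Product_Plus" "HOL-Library.Function_Algebras" "HOL-Computational_Algebra.Primes"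
begin

text \<open>The rational group algebra Q[G] is the type G \<Rightarrow> rat (all functions,
  G finite), with convolution as multiplication.\<close>

definition gconv :: "('g::{finite,ab_group_add} \<Rightarrow> rat) \<Rightarrow> ('g \<Rightarrow> rat) \<Rightarrow> ('g \<Rightarrow> rat)" where
  "gconv f h = (\<lambda>x. \<Sum>y\<in>UNIV. f y * h (x - y))"

definition gone :: "'g::{finite,ab_group_add} \<Rightarrow> rat" where
  "gone = (\<lambda>x. if x = 0 then 1 else 0)"

primrec gpow :: "('g::{finite,ab_group_add} \<Rightarrow> rat) \<Rightarrow> nat \<Rightarrow> ('g \<Rightarrow> rat)" where
  "gpow f 0 = gone"
| "gpow f (Suc n) = gconv f (gpow f n)"

definition int_group_ring :: "('g::{finite,ab_group_add} \<Rightarrow> rat) set" where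
  "int_group_ring = {f. \<forall>x. f x \<in> \<int>}"

definition integral_over :: "('g::{finite,ab_group_add} \<Rightarrow> rat) set \<Rightarrow> ('g \<Rightarrow> rat) \<Rightarrow> bool" where
  "integral_over R x \<longleftrightarrow>
     (\<exists>n c. (\<forall>i<n. c i \<in> R) \<and> gpow x n + (\<Sum>i<n. gconv (c i) (gpow x i)) = 0)"

definition integral_closure :: "('g::{finite,ab_group_add} \<Rightarrow> rat) set \<Rightarrow> ('g \<Rightarrow> rat) set" where
  "integral_closure R = {x. integral_over R x}"

definition conductor :: "('g::{finite,ab_group_add} \<Rightarrow> rat) set \<Rightarrow> ('g \<Rightarrow> rat) set \<Rightarrow> ('g \<Rightarrow> rat) set" where
  "conductor S R = {s \<in> S. \<forall>t\<in>S. gconv s t \<in> R}"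

text \<open>Elementary tensor, via Q[G1] \<otimes> Q[G2] \<cong> Q[G1 \<times> G2].\<close>
definition gtens :: "('a \<Rightarrow> rat) \<Rightarrow> ('b \<Rightarrow> rat) \<Rightarrow> ('a \<times> 'b \<Rightarrow> rat)" where
  "gtens f h = (\<lambda>(a, b). f a * h b)"

text \<open>A \<otimes> B for additive subgroups A, B: the image of A \<otimes>_Z B in Q[G1 \<times> G2],
  i.e. the additive subgroup generated by elementary tensors (injective since all groups
  are free abelian).\<close>
definition tensor_sub :: "('a \<Rightarrow> rat) set \<Rightarrow> ('b \<Rightarrow> rat) set \<Rightarrow> ('a \<times> 'b \<Rightarrow> rat) set" where
  "tensor_sub A B = {\<Sum>i<n. (\<lambda>x. of_int (k i) * gtens (f i) (h i) x) | (n::nat) k f h.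
                        \<forall>i<n. f i \<in> A \<and> h i \<in> B}"

end

theory Submission
  imports Defs "Jordan_Normal_Form.Char_Poly"
begin


lemma gconv_comm: "gconv f h = gconv h (f::'g::{finite,ab_group_add} \<Rightarrow> rat)"
proof (rule ext)
  fix x
  have "(\<Sum>y\<in>UNIV. f y * h (x - y)) = (\<Sum>y\<in>UNIV. f (x - y) * h (x - (x - y)))"
    by (rule sum.reindex_bij_witness[where i="\<lambda>y. x - y" and j="\<lambda>y. x - y"]) auto
  then show "gconv f h x = gconv h f x" by (simp add: gconv_def mult.commute)
qed

lemma gconv_assoc: "gconv (gconv f g) h = gconv f (gconv g (h::'g::{finite,ab_group_add} \<Rightarrow> rat))"
proof (rule ext)
  fix x
  have "gconv (gconv f g) h x = (\<Sum>z\<in>UNIV. \<Sum>y\<in>UNIV. f y * g (z - y) * h (x - z))"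
    by (simp add: gconv_def sum_distrib_right)
  also have "\<dots> = (\<Sum>y\<in>UNIV. \<Sum>z\<in>UNIV. f y * g (z - y) * h (x - z))"
    by (rule sum.swap)
  also have "\<dots> = (\<Sum>y\<in>UNIV. \<Sum>z\<in>UNIV. f y * g z * h (x - y - z))"
  proof (rule sum.cong[OF refl])
    fix y
    show "(\<Sum>z\<in>UNIV. f y * g (z - y) * h (x - z)) = (\<Sum>z\<in>UNIV. f y * g z * h (x - y - z))"
      by (rule sum.reindex_bij_witness[where i="\<lambda>z. z + y" and j="\<lambda>z. z - y"])
         (auto simp: algebra_simps)
  qed
  also have "\<dots> = gconv f (gconv g h) x"
    by (simp add: gconv_def sum_distrib_left mult.assoc)
  finally show "gconv (gconv f g) h x = gconv f (gconv g h) x" .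
qed

lemma gconv_add_left: "gconv (f + g) h = gconv f h + gconv g (h::'g::{finite,ab_group_add} \<Rightarrow> rat)"
  by (rule ext) (simp add: gconv_def distrib_right sum.distrib)

lemma gconv_add_right: "gconv h (f + g) = gconv h f + gconv h (g::'g::{finite,ab_group_add} \<Rightarrow> rat)"
  by (rule ext) (simp add: gconv_def distrib_left sum.distrib)

lemma gconv_gone_left: "gconv gone f = (f::'g::{finite,ab_group_add} \<Rightarrow> rat)"
proof (rule ext)
  fix x
  have "gconv gone f x = (\<Sum>y\<in>UNIV. if y = 0 then f (x - y) else 0)"
    unfolding gconv_def gone_def by (rule sum.cong) auto
  also have "\<dots> = f x" by (simp add: sum.delta)
  finally show "gconv gone f x = f x" .
qed

lemma gconv_gone_right: "gconv f gone = (f::'g::{finite,ab_group_add} \<Rightarrow> rat)"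
  using gconv_gone_left gconv_comm by metis

lemma gconv_zero_left: "gconv 0 f = (0::'g::{finite,ab_group_add} \<Rightarrow> rat)"
  by (rule ext) (simp add: gconv_def)

lemma gconv_zero_right: "gconv f 0 = (0::'g::{finite,ab_group_add} \<Rightarrow> rat)"
  by (rule ext) (simp add: gconv_def)

lemma gconv_uminus_left: "gconv (- f) h = - gconv f (h::'g::{finite,ab_group_add} \<Rightarrow> rat)"
  by (rule ext) (simp add: gconv_def sum_negf)

lemma gconv_diff_left: "gconv (f - g) h = gconv f h - gconv g (h::'g::{finite,ab_group_add} \<Rightarrow> rat)"
  by (rule ext) (simp add: gconv_def left_diff_distrib sum_subtractf)

lemma gone_ne_zero: "gone \<noteq> (0::'g::{finite,ab_group_add} \<Rightarrow> rat)"
proof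
  assume "gone = (0::'g \<Rightarrow> rat)"
  then have "gone (0::'g) = (0::rat)" by simp
  then show False by (simp add: gone_def)
qed

typedef 'g qg = "UNIV :: ('g \<Rightarrow> rat) set" morphisms rep Abs by auto

setup_lifting type_definition_qg

instantiation qg :: ("{finite,ab_group_add}") comm_ring_1
begin
lift_definition zero_qg :: "'a qg" is "0" .
lift_definition one_qg :: "'a qg" is "gone" .
lift_definition plus_qg :: "'a qg \<Rightarrow> 'a qg \<Rightarrow> 'a qg" is "(+)" .
lift_definition minus_qg :: "'a qg \<Rightarrow> 'a qg \<Rightarrow> 'a qg" is "(-)" .
lift_definition uminus_qg :: "'a qg \<Rightarrow> 'a qg" is "uminus" .
lift_definition times_qg :: "'a qg \<Rightarrow> 'a qg \<Rightarrow> 'a qg" is "gconv" .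
instance
proof
  fix a b c :: "'a qg"
  show "a * b * c = a * (b * c)" by transfer (rule gconv_assoc)
  show "a * b = b * a" by transfer (rule gconv_comm)
  show "1 * a = a" by transfer (rule gconv_gone_left)
  show "(a + b) * c = a * c + b * c" by transfer (rule gconv_add_left)
  show "(0::'a qg) \<noteq> 1" by transfer (metis gone_ne_zero)
  show "a + b + c = a + (b + c)" by transfer (simp add: add.assoc)
  show "a + b = b + a" by transfer (simp add: add.commute)
  show "0 + a = a" by transfer simp
  show "- a + a = 0" by transfer simp
  show "a - b = a + - b" by transfer simp
qed
end

lemma rep_add: "rep (a + b) = rep a + rep b" by transfer simp
lemma rep_diff: "rep (a - b) = rep a - rep b" by transfer simp
lemma rep_uminus: "rep (- a) = - rep a" by transfer simp
lemma rep_mult: "rep (a * b) = gconv (rep a) (rep b)" by transfer simp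
lemma rep_one: "rep 1 = gone" by transfer simp
lemma rep_zero: "rep 0 = 0" by transfer simp
lemma rep_sum: "rep (sum f A) = (\<Sum>x\<in>A. rep (f x))"
  by (induction A rule: infinite_finite_induct) (auto simp: rep_add rep_zero)
lemma rep_power: "rep (x ^ n) = gpow (rep x) n"
  by (induction n) (auto simp: rep_one rep_mult)
lemma rep_of_int: "rep (of_int k) = (\<lambda>g. of_int k * gone g)"
proof (induction k rule: int_induct[where k=0])
  case base then show ?case by (simp add: rep_zero)
next
  case (step1 i) then show ?case by (simp add: rep_add rep_one algebra_simps)
next
  case (step2 i) then show ?case by (simp add: rep_diff rep_one algebra_simps)
qed


definition zint :: "'r::comm_ring_1 \<Rightarrow> bool" where
  "zint x \<longleftrightarrow> (\<exists>P::int poly. monic P \<and> poly (map_poly of_int P) x = 0)"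

definition zspan :: "'r::comm_ring_1 set \<Rightarrow> 'r set" where
  "zspan W = {y. \<exists>c. y = (\<Sum>w\<in>W. of_int (c w) * w)}"

lemma poly_map_const: "poly (map_poly of_int [:a:]) (x::'r::comm_ring_1) = of_int a"
  by (cases "a = 0") (simp_all add: map_poly_pCons)

lemma det_trick_nat:
  fixes x :: "'r::comm_ring_1" and e :: "nat \<Rightarrow> 'r" and c :: "nat \<Rightarrow> nat \<Rightarrow> int"
  assumes lin: "\<And>i. i < n \<Longrightarrow> x * e i = (\<Sum>j<n. of_int (c i j) * e j)"
    and one: "i0 < n" "e i0 = 1"
  shows "zint x"
proof -
  define A :: "int mat" where "A = mat n n (\<lambda>(i,j). c i j)"
  have A: "A \<in> carrier_mat n n" by (simp add: A_def)
  define h :: "int poly \<Rightarrow> 'r" where "h = (\<lambda>p. poly (map_poly of_int p) x)"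
  interpret h: comm_ring_hom h
    by unfold_locales (simp_all add: h_def of_int_poly_hom.hom_add of_int_poly_hom.hom_mult)
  define M where "M = mat n n (\<lambda>(i,j). (if i = j then x else 0) - (of_int (c i j) :: 'r))"
  have M: "M \<in> carrier_mat n n" by (simp add: M_def)
  define v where "v = vec n e"
  have v: "v \<in> carrier_vec n" by (simp add: v_def)
  have Mv: "M *\<^sub>v v = 0\<^sub>v n"
  proof (rule eq_vecI)
    fix i assume "i < dim_vec (0\<^sub>v n :: 'r vec)"
    then have i: "i < n" by simp
    have "(M *\<^sub>v v) $ i = (\<Sum>j<n. ((if i = j then x else 0) - of_int (c i j)) * e j)"
      using i by (simp add: M_def v_def mult_mat_vec_def scalar_prod_def atLeast0LessThan)
    also have "\<dots> = (\<Sum>j<n. (if i = j then x * e j else 0) - of_int (c i j) * e j)"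
      by (rule sum.cong) (auto simp: left_diff_distrib)
    also have "\<dots> = (\<Sum>j<n. (if i = j then x * e j else 0)) - (\<Sum>j<n. of_int (c i j) * e j)"
      by (simp add: sum_subtractf)
    also have "\<dots> = x * e i - x * e i" using i lin[OF i] by (simp add: sum.delta)
    finally show "(M *\<^sub>v v) $ i = (0\<^sub>v n :: 'r vec) $ i" using i by simp
  qed (simp add: M_def)
  have adj: "adj_mat M * M = det M \<cdot>\<^sub>m 1\<^sub>m n" using adj_mat[OF M] by simp
  have "(adj_mat M * M) *\<^sub>v v = adj_mat M *\<^sub>v (M *\<^sub>v v)"
    using adj_mat(1)[OF M] M v by simp
  also have "\<dots> = 0\<^sub>v n" unfolding Mv using adj_mat(1)[OF M]
    by (intro eq_vecI) (auto simp: mult_mat_vec_def scalar_prod_def)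
  finally have "(det M \<cdot>\<^sub>m 1\<^sub>m n) *\<^sub>v v = 0\<^sub>v n" unfolding adj .
  then have "((det M \<cdot>\<^sub>m 1\<^sub>m n) *\<^sub>v v) $ i0 = 0" using one by simp
  moreover have "((det M \<cdot>\<^sub>m 1\<^sub>m n) *\<^sub>v v) $ i0 = det M * v $ i0"
    using v one by simp
  ultimately have detM: "det M = 0" using one by (simp add: v_def)
  have "map_mat h (char_poly_matrix A) = M"
  proof (rule eq_matI)
    fix i j assume "i < dim_row M" "j < dim_col M"
    then have ij: "i < n" "j < n" by (auto simp: M_def)
    show "map_mat h (char_poly_matrix A) $$ (i, j) = M $$ (i, j)"
      using ij A by (simp add: char_poly_matrix_def M_def A_def h_def poly_map_const)
  qed (auto simp: char_poly_matrix_def M_def A_def)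
  then have "h (char_poly A) = det M"
    unfolding char_poly_def by (simp flip: h.hom_det)
  with detM have "poly (map_poly of_int (char_poly A)) x = 0" by (simp add: h_def)
  moreover have "monic (char_poly A)" using degree_monic_char_poly[OF A] by simp
  ultimately show ?thesis unfolding zint_def by blast
qed


lemma zspan_gen: "finite W \<Longrightarrow> w \<in> W \<Longrightarrow> w \<in> zspan W"
proof -
  assume W: "finite W" "w \<in> W"
  have "(\<Sum>v\<in>W. of_int (if v = w then 1 else 0) * v) = (\<Sum>v\<in>W. if v = w then v else 0)"
    by (rule sum.cong) auto
  also have "\<dots> = w" using W by (simp add: sum.delta')
  finally show ?thesis unfolding zspan_def by (intro CollectI exI[of _ "\<lambda>v. if v = w then 1 else 0"]) simp
qed

lemma zspan_add: "a \<in> zspan W \<Longrightarrow> b \<in> zspan W \<Longrightarrow> a + b \<in> zspan W"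
proof -
  assume "a \<in> zspan W" "b \<in> zspan W"
  then obtain c d where "a = (\<Sum>w\<in>W. of_int (c w) * w)" "b = (\<Sum>w\<in>W. of_int (d w) * w)"
    by (auto simp: zspan_def)
  then show ?thesis unfolding zspan_def
    by (intro CollectI exI[of _ "\<lambda>w. c w + d w"]) (simp add: sum.distrib distrib_right)
qed

lemma zspan_zero: "0 \<in> zspan W"
  unfolding zspan_def by (auto intro!: exI[of _ "\<lambda>w. 0"])

lemma zspan_smult: "a \<in> zspan W \<Longrightarrow> of_int k * a \<in> zspan W"
proof -
  assume "a \<in> zspan W"
  then obtain c where "a = (\<Sum>w\<in>W. of_int (c w) * w)" by (auto simp: zspan_def)
  then show ?thesis unfolding zspan_def
    by (intro CollectI exI[of _ "\<lambda>w. k * c w"]) (simp add: sum_distrib_left mult.assoc)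
qed

lemma zspan_sum: "(\<And>i. i \<in> I \<Longrightarrow> f i \<in> zspan W) \<Longrightarrow> sum f I \<in> zspan W"
  by (induction I rule: infinite_finite_induct) (auto intro: zspan_add zspan_zero)

lemma zspan_mult:
  assumes "\<And>w. w \<in> W \<Longrightarrow> x * w \<in> zspan W" and "a \<in> zspan W"
  shows "x * a \<in> zspan W"
proof -
  from assms(2) obtain c where a: "a = (\<Sum>w\<in>W. of_int (c w) * w)" by (auto simp: zspan_def)
  have "x * a = (\<Sum>w\<in>W. of_int (c w) * (x * w))" by (simp add: a sum_distrib_left algebra_simps)
  also have "\<dots> \<in> zspan W" by (intro zspan_sum zspan_smult assms(1))
  finally show ?thesis .
qed

lemma det_trick:
  fixes x :: "'r::comm_ring_1"
  assumes W: "finite W" "1 \<in> W" and st: "\<And>w. w \<in> W \<Longrightarrow> x * w \<in> zspan W"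
  shows "zint x"
proof -
  define n where "n = card W"
  obtain e where e: "bij_betw e {0..<n} W" using ex_bij_betw_nat_finite[OF W(1)] n_def by blast
  have ex: "\<exists>c. x * e i = (\<Sum>j<n. of_int (c j) * e j)" if i: "i < n" for i
  proof -
    have "e i \<in> W" using e i by (auto simp: bij_betw_def)
    then obtain c where c: "x * e i = (\<Sum>w\<in>W. of_int (c w) * w)" using st by (auto simp: zspan_def)
    have "(\<Sum>w\<in>W. of_int (c w) * w) = (\<Sum>j\<in>{0..<n}. of_int (c (e j)) * e j)"
      using sum.reindex_bij_betw[OF e, of "\<lambda>w. of_int (c w) * w"] by simp
    then show ?thesis using c by (intro exI[of _ "\<lambda>j. c (e j)"]) (simp add: atLeast0LessThan)
  qed
  define cc where "cc = (\<lambda>i. SOME c. x * e i = (\<Sum>j<n. of_int (c j) * e j))"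
  have lin: "x * e i = (\<Sum>j<n. of_int (cc i j) * e j)" if "i < n" for i
    unfolding cc_def using someI_ex[OF ex[OF that]] .
  have "1 \<in> e ` {0..<n}" using W(2) bij_betw_imp_surj_on[OF e] by simp
  then obtain i0 where i0: "i0 < n" "e i0 = 1" by auto
  show ?thesis by (rule det_trick_nat[of n x e cc i0, OF lin i0])
qed

lemma deg_map_monic: "monic P \<Longrightarrow> degree (map_poly (of_int::int\<Rightarrow>'r::comm_ring_1) P) = degree P"
  by (rule antisym[OF degree_map_poly_le le_degree]) (simp add: coeff_map_poly)

lemma zint_power_reduce:
  fixes x :: "'r::comm_ring_1"
  assumes "monic P" "poly (map_poly of_int P) x = 0"
  shows "x ^ degree P = - (\<Sum>i<degree P. of_int (coeff P i) * x ^ i)"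
proof -
  let ?n = "degree P"
  have "0 = (\<Sum>i\<le>?n. coeff (map_poly of_int P) i * x ^ i)"
    using assms(2) by (simp add: poly_altdef deg_map_monic[OF assms(1)])
  also have "\<dots> = (\<Sum>i\<le>?n. of_int (coeff P i) * x ^ i)"
    by (simp add: coeff_map_poly)
  also have "\<dots> = (\<Sum>i<?n. of_int (coeff P i) * x ^ i) + x ^ ?n"
    using assms(1) by (simp add: lessThan_Suc_atMost[symmetric])
  finally show ?thesis by (simp add: eq_neg_iff_add_eq_0 add.commute)
qed

lemma zint_degree_pos:
  assumes "monic P" "poly (map_poly of_int P) (x::'r::comm_ring_1) = 0"
  shows "degree P > 0"
proof (rule ccontr)
  assume "\<not> degree P > 0"
  then have "P = 1" using assms(1) by (metis monic_degree_0 neq0_conv)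
  then show False using assms(2) by simp
qed

lemma zint_pair_module:
  fixes x y :: "'r::comm_ring_1"
  assumes "zint x" "zint y"
  shows "\<exists>W. finite W \<and> 1 \<in> W \<and> (\<forall>w\<in>W. x * w \<in> zspan W) \<and> (\<forall>w\<in>W. y * w \<in> zspan W)"
proof -
  obtain P where P: "monic P" "poly (map_poly of_int P) x = 0" using assms(1) by (auto simp: zint_def)
  obtain Q where Q: "monic Q" "poly (map_poly of_int Q) y = 0" using assms(2) by (auto simp: zint_def)
  define n where "n = degree P"
  define m where "m = degree Q"
  have n: "n > 0" unfolding n_def by (rule zint_degree_pos[OF P])
  have m: "m > 0" unfolding m_def by (rule zint_degree_pos[OF Q])
  define W where "W = (\<lambda>(i,j). x ^ i * y ^ j) ` ({..<n} \<times> {..<m})"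
  have fW: "finite W" by (simp add: W_def)
  have gen: "x ^ i * y ^ j \<in> zspan W" if "i < n" "j < m" for i j
    using that by (intro zspan_gen fW) (auto simp: W_def)
  have xn: "x ^ n = - (\<Sum>i<n. of_int (coeff P i) * x ^ i)"
    unfolding n_def by (rule zint_power_reduce[OF P])
  have yn: "y ^ m = - (\<Sum>i<m. of_int (coeff Q i) * y ^ i)"
    unfolding m_def by (rule zint_power_reduce[OF Q])
  have xs: "x * (x ^ i * y ^ j) \<in> zspan W" if "i < n" "j < m" for i j
  proof (cases "Suc i < n")
    case True
    then show ?thesis using gen[OF True that(2)] by (simp add: mult.assoc)
  next
    case False
    then have i: "Suc i = n" using that by simp
    have "x * (x ^ i * y ^ j) = x ^ n * y ^ j" by (simp add: i[symmetric] mult.assoc)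
    also have "\<dots> = of_int (-1) * (\<Sum>k<n. of_int (coeff P k) * (x ^ k * y ^ j))"
      by (simp add: xn sum_distrib_right mult.assoc)
    also have "\<dots> \<in> zspan W"
      by (intro zspan_smult zspan_sum gen that) simp
    finally show ?thesis .
  qed
  have ys: "y * (x ^ i * y ^ j) \<in> zspan W" if "i < n" "j < m" for i j
  proof (cases "Suc j < m")
    case True
    then show ?thesis using gen[OF that(1) True] by (simp add: algebra_simps)
  next
    case False
    then have j: "Suc j = m" using that by simp
    have "y * (x ^ i * y ^ j) = x ^ i * y ^ m" by (simp add: j[symmetric] algebra_simps)
    also have "\<dots> = of_int (-1) * (\<Sum>k<m. of_int (coeff Q k) * (x ^ i * y ^ k))"
      by (simp add: yn sum_distrib_left algebra_simps sum_negf)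
    also have "\<dots> \<in> zspan W"
      by (intro zspan_smult zspan_sum gen that) simp
    finally show ?thesis .
  qed
  have "1 \<in> W" using n m unfolding W_def by (auto intro!: image_eqI[of _ _ "(0,0)"])
  moreover have "\<forall>w\<in>W. x * w \<in> zspan W" using xs by (auto simp: W_def)
  moreover have "\<forall>w\<in>W. y * w \<in> zspan W" using ys by (auto simp: W_def)
  ultimately show ?thesis using fW by blast
qed

lemma zint_add: "zint x \<Longrightarrow> zint y \<Longrightarrow> zint (x + (y::'r::comm_ring_1))"
proof -
  assume a: "zint x" "zint y"
  obtain W where W: "finite W" "1 \<in> W" "\<forall>w\<in>W. x * w \<in> zspan W" "\<forall>w\<in>W. y * w \<in> zspan W"
    using zint_pair_module[OF a] by metis
  have st: "(x + y) * w \<in> zspan W" if "w \<in> W" for w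
  proof -
    have "x * w + y * w \<in> zspan W" using W that by (simp add: zspan_add)
    then show ?thesis by (simp add: distrib_right)
  qed
  show "zint (x + y)"
    by (rule det_trick[OF W(1) W(2) st])
qed

lemma zint_mult: "zint x \<Longrightarrow> zint y \<Longrightarrow> zint (x * (y::'r::comm_ring_1))"
proof -
  assume a: "zint x" "zint y"
  obtain W where W: "finite W" "1 \<in> W" "\<forall>w\<in>W. x * w \<in> zspan W" "\<forall>w\<in>W. y * w \<in> zspan W"
    using zint_pair_module[OF a] by metis
  have st: "x * y * w \<in> zspan W" if "w \<in> W" for w
  proof -
    have "y * w \<in> zspan W" using W that by simp
    then have "x * (y * w) \<in> zspan W" using W(3) zspan_mult[of W x "y * w"] by blast
    then show ?thesis by (simp add: mult.assoc)
  qed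
  show "zint (x * y)"
    by (rule det_trick[OF W(1) W(2) st])
qed

lemma map_lin: "map_poly (of_int :: int \<Rightarrow> 'r::comm_ring_1) [:a, 1:] = [:of_int a, 1:]"
  by (rule poly_eqI) (simp add: coeff_map_poly coeff_pCons split: nat.split)

lemma zint_of_int: "zint (of_int k :: 'r::comm_ring_1)"
  unfolding zint_def
  by (rule exI[of _ "[:-k, 1:]"]) (simp add: map_lin)

lemma zint_sum: "(\<And>i. i \<in> I \<Longrightarrow> zint (f i)) \<Longrightarrow> zint (sum f I :: 'r::comm_ring_1)"
proof (induction I rule: infinite_finite_induct)
  case (infinite A) then show ?case using zint_of_int[of 0] by simp
next
  case empty then show ?case using zint_of_int[of 0] by simp
next
  case (insert a A) then show ?case by (simp add: zint_add)
qed


lemma prod_lin_coeff: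
  fixes a :: "nat \<Rightarrow> 'a::comm_ring_1"
  shows "coeff (\<Prod>i<n. [:- a i, 1:]) n = 1 \<and> degree (\<Prod>i<n. [:- a i, 1:]) \<le> n \<and>
    coeff (\<Prod>i<n. [:- a i, 1:]) (n - 1) = (if n = 0 then 1 else - (\<Sum>i<n. a i))"
proof (induction n)
  case 0 then show ?case by simp
next
  case (Suc n)
  define Q where "Q = (\<Prod>i<n. [:- a i, 1:])"
  have IH: "coeff Q n = 1" "degree Q \<le> n" "coeff Q (n - 1) = (if n = 0 then 1 else - (\<Sum>i<n. a i))"
    using Suc by (auto simp: Q_def)
  have P: "(\<Prod>i<Suc n. [:- a i, 1:]) = Q * [:- a n, 1:]" by (simp add: Q_def)
  have cf: "coeff (Q * [:- a n, 1:]) k = - a n * coeff Q k + (if k = 0 then 0 else coeff Q (k - 1))" for k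
    by (simp add: mult_pCons_right coeff_pCons split: nat.split)
  have c1: "coeff Q (Suc n) = 0" using IH(2) by (simp add: coeff_eq_0)
  have deg: "degree (Q * [:- a n, 1:]) \<le> Suc n"
    using degree_mult_le[of Q "[:- a n, 1:]"] IH(2) by simp
  have e1: "coeff (Q * [:- a n, 1:]) (Suc n) = 1" by (simp only: cf) (use IH c1 in simp)
  have e2: "coeff (Q * [:- a n, 1:]) n = - (\<Sum>i<Suc n. a i)"
  proof (cases n)
    case 0 then show ?thesis by (simp only: cf) (use IH in simp)
  next
    case (Suc m) then show ?thesis by (simp only: cf) (use IH in simp)
  qed
  show ?case unfolding P using e1 e2 deg by simp
qed

lemma coeff_char_poly_trace:
  fixes A :: "'a::comm_ring_1 mat"
  assumes A: "A \<in> carrier_mat n n" and n: "n > 0"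
  shows "coeff (char_poly A) (n - 1) = - (\<Sum>i<n. A $$ (i,i))"
proof -
  define CM where "CM = char_poly_matrix A"
  have CM: "CM \<in> carrier_mat n n" using A by (simp add: CM_def)
  have CMij: "CM $$ (i,j) = (if i = j then [:0, 1:] else 0) + [:- A $$ (i,j):]" if "i < n" "j < n" for i j
    using that A by (simp add: CM_def char_poly_matrix_def)
  define T where "T = (\<lambda>p. signof p * (\<Prod>i = 0..<n. CM $$ (i, p i)) :: 'a poly)"
  define PS where "PS = {p. p permutes {0..<n}}"
  have fin: "finite PS" unfolding PS_def by (simp add: finite_permutations)
  have idin: "id \<in> PS" unfolding PS_def by (simp add: permutes_id)
  have cp: "char_poly A = (\<Sum>p\<in>PS. T p)"
    unfolding char_poly_def CM_def[symmetric] det_def'[OF CM] T_def PS_def ..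
  have other: "coeff (T p) (n - 1) = 0" if p: "p \<in> PS" "p \<noteq> id" for p
  proof -
    have pp: "p permutes {0..<n}" using p unfolding PS_def by simp
    obtain i0 where i0: "i0 < n" "p i0 \<noteq> i0"
      using pp p(2) by (metis atLeastLessThan_iff order_refl permutes_natset_le)
    have pi0: "p i0 < n" using pp i0 by (simp add: permutes_in_image)
    have pi0': "p (p i0) \<noteq> p i0" using pp i0(2) by (metis permutes_inj injD)
    have degle: "degree (CM $$ (i, p i)) \<le> (if p i = i then 1 else 0)" if "i < n" for i
    proof -
      have "p i < n" using pp that by (simp add: permutes_in_image)
      then show ?thesis using that by (auto simp: CMij)
    qed
    have "degree (T p) = degree (\<Prod>i = 0..<n. CM $$ (i, p i))" by (simp add: T_def)
    also have "\<dots> \<le> (\<Sum>i = 0..<n. degree (CM $$ (i, p i)))"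
      using degree_prod_sum_le[of "{0..<n}" "\<lambda>i. CM $$ (i, p i)"] by (simp add: o_def)
    also have "\<dots> \<le> (\<Sum>i = 0..<n. (if p i = i then 1 else 0))"
      by (rule sum_mono) (use degle in auto)
    also have "\<dots> = (\<Sum>i\<in>{0..<n} - {i0, p i0}. (if p i = i then 1 else 0))"
      using i0 pi0 pi0' by (intro sum.mono_neutral_right) auto
    also have "\<dots> \<le> (\<Sum>i\<in>{0..<n} - {i0, p i0}. 1)"
      by (rule sum_mono) auto
    also have "\<dots> = n - 2" using i0 pi0 by (simp add: card_Diff_subset)
    finally have "degree (T p) \<le> n - 2" .
    moreover have "n \<ge> 2" using i0 pi0 by linarith
    ultimately show ?thesis by (intro coeff_eq_0) linarith
  qed
  have idT: "T id = (\<Prod>i<n. [:- A $$ (i,i), 1:])"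
    unfolding T_def by (simp add: CMij atLeast0LessThan signof_id)
  have "coeff (char_poly A) (n - 1) = (\<Sum>p\<in>PS. coeff (T p) (n - 1))"
    unfolding cp coeff_sum ..
  also have "\<dots> = coeff (T id) (n - 1)"
    using other by (intro sum.mono_neutral_left[symmetric, where S="{id}", simplified]) (auto simp: fin idin)
  also have "\<dots> = - (\<Sum>i<n. A $$ (i,i))"
    unfolding idT using prod_lin_coeff[of "\<lambda>i. A $$ (i,i)" n] n by simp
  finally show ?thesis .
qed

lemma coeff_prod_list_lin:
  fixes as :: "'a::comm_ring_1 list"
  assumes "as \<noteq> []"
  shows "coeff (\<Prod>a\<leftarrow>as. [:- a, 1:]) (length as - 1) = - sum_list as"
proof -
  have "(\<Prod>a\<leftarrow>as. [:- a, 1:]) = (\<Prod>i<length as. [:- (as ! i), 1:])"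
    by (simp add: prod.list_conv_set_nth atLeast0LessThan)
  moreover have "sum_list as = (\<Sum>i<length as. as ! i)"
    by (simp add: sum_list_sum_nth atLeast0LessThan)
  ultimately show ?thesis using prod_lin_coeff[of "\<lambda>i. as ! i" "length as"] assms by simp
qed


lemma gconv_scal: "gconv (\<lambda>g. c * gone g) f = (\<lambda>y. c * (f::'g::{finite,ab_group_add} \<Rightarrow> rat) y)"
proof (rule ext)
  fix y
  have "gconv (\<lambda>g. c * gone g) f y = (\<Sum>z\<in>UNIV. if z = 0 then c * f (y - z) else 0)"
    unfolding gconv_def gone_def by (rule sum.cong) auto
  then show "gconv (\<lambda>g. c * gone g) f y = c * f y" by (simp add: sum.delta)
qed

lemma rep_of_int_mult: "rep (of_int k * X) = (\<lambda>y. of_int k * rep X y)"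
  by (simp add: rep_mult rep_of_int gconv_scal)

definition Lc :: "(nat \<Rightarrow> 'g::{finite,ab_group_add}) \<Rightarrow> nat \<Rightarrow> 'g qg \<Rightarrow> complex mat" where
  "Lc e N X = mat N N (\<lambda>(i,j). of_rat (rep X (e i - e j)))"

lemma Lc_carrier: "Lc e N X \<in> carrier_mat N N" by (simp add: Lc_def)
lemma Lc_dim[simp]: "dim_row (Lc e N X) = N" "dim_col (Lc e N X) = N" by (simp_all add: Lc_def)

lemma Lc_mult:
  assumes e: "bij_betw e {0..<N} (UNIV::'g::{finite,ab_group_add} set)"
  shows "Lc e N (X * Y) = Lc e N X * Lc e N Y"
proof (rule eq_matI)
  fix i j assume "i < dim_row (Lc e N X * Lc e N Y)" "j < dim_col (Lc e N X * Lc e N Y)"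
  then have ij: "i < N" "j < N" by (auto simp: Lc_def)
  have "(Lc e N X * Lc e N Y) $$ (i,j) = (\<Sum>k = 0..<N. of_rat (rep X (e i - e k)) * of_rat (rep Y (e k - e j)))"
    using ij by (simp add: Lc_def scalar_prod_def)
  also have "\<dots> = (\<Sum>h\<in>UNIV. of_rat (rep X (e i - h)) * of_rat (rep Y (h - e j)))"
    using sum.reindex_bij_betw[OF e, of "\<lambda>h. of_rat (rep X (e i - h)) * of_rat (rep Y (h - e j)) :: complex"]
    by simp
  also have "\<dots> = of_rat (\<Sum>h\<in>UNIV. rep X (e i - h) * rep Y (h - e j))"
    by (simp add: of_rat_sum of_rat_mult)
  also have "(\<Sum>h\<in>UNIV. rep X (e i - h) * rep Y (h - e j)) = (\<Sum>z\<in>UNIV. rep X z * rep Y (e i - e j - z))"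
    by (rule sum.reindex_bij_witness[where i="\<lambda>z. e i - z" and j="\<lambda>h. e i - h"]) (auto simp: algebra_simps)
  also have "\<dots> = rep (X * Y) (e i - e j)" by (simp add: rep_mult gconv_def)
  finally show "Lc e N (X * Y) $$ (i,j) = (Lc e N X * Lc e N Y) $$ (i,j)"
    using ij by (simp add: Lc_def)
qed (auto simp: Lc_def)

lemma Lc_one:
  assumes e: "bij_betw e {0..<N} (UNIV::'g::{finite,ab_group_add} set)"
  shows "Lc e N (1::'g qg) = 1\<^sub>m N"
proof (rule eq_matI)
  fix i j assume "i < dim_row (1\<^sub>m N :: complex mat)" "j < dim_col (1\<^sub>m N :: complex mat)"
  then have ij: "i < N" "j < N" by auto
  have "e i = e j \<longleftrightarrow> i = j" using e ij by (auto simp: bij_betw_def inj_on_def)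
  then show "Lc e N 1 $$ (i,j) = 1\<^sub>m N $$ (i,j)"
    using ij by (simp add: Lc_def rep_one gone_def)
qed (auto simp: Lc_def)

lemma Lc_pow:
  assumes e: "bij_betw e {0..<N} (UNIV::'g::{finite,ab_group_add} set)"
  shows "Lc e N (X ^ k) = Lc e N X ^\<^sub>m k"
proof (induction k)
  case 0 then show ?case by (simp add: Lc_one[OF e])
next
  case (Suc k)
  have "Lc e N (X ^ Suc k) = Lc e N (X ^ k) * Lc e N X" by (simp only: power_Suc2 Lc_mult[OF e])
  then show ?case using Suc by simp
qed

definition phi :: "(nat \<Rightarrow> 'g::{finite,ab_group_add}) \<Rightarrow> nat \<Rightarrow> complex vec \<Rightarrow> nat \<Rightarrow> 'g qg \<Rightarrow> complex" where
  "phi e N v r Y = (\<Sum>j<N. of_rat (rep Y (e r - e j)) * v $ j)"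

lemma phi_Lc: "v \<in> carrier_vec N \<Longrightarrow> r < N \<Longrightarrow> (Lc e N Y *\<^sub>v v) $ r = phi e N v r Y"
  by (simp add: Lc_def phi_def mult_mat_vec_def scalar_prod_def atLeast0LessThan)

lemma phi_add: "phi e N v r (X + Y) = phi e N v r X + phi e N v r Y"
  by (simp add: phi_def rep_add of_rat_add distrib_right sum.distrib)

lemma phi_zero: "phi e N v r 0 = 0"
  by (simp add: phi_def rep_zero)

lemma phi_smult: "phi e N v r (of_int k * Y) = of_int k * phi e N v r Y"
  by (simp add: phi_def rep_of_int_mult of_rat_mult sum_distrib_left mult.assoc)

lemma phi_sum: "phi e N v r (sum f I) = (\<Sum>i\<in>I. phi e N v r (f i))"
  by (induction I rule: infinite_finite_induct) (auto simp: phi_zero phi_add)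

lemma eigen_root:
  assumes e: "bij_betw e {0..<N} (UNIV::'g::{finite,ab_group_add} set)"
    and P: "monic P" "poly (map_poly of_int P) (X::'g qg) = 0"
    and ev: "eigenvalue (Lc e N X) lam"
  shows "poly (map_poly of_int P) lam = 0"
proof -
  obtain v where v: "eigenvector (Lc e N X) v lam" using ev by (auto simp: eigenvalue_def)
  have vc: "v \<in> carrier_vec N" and vnz: "v \<noteq> 0\<^sub>v N"
    using v by (auto simp: eigenvector_def Lc_def)
  obtain r where r: "r < N" "v $ r \<noteq> 0"
    using vnz vc by (metis eq_vecI carrier_vecD index_zero_vec(1) index_zero_vec(2))
  have pw: "phi e N v r (X ^ k) = lam ^ k * v $ r" for k
  proof -
    have "phi e N v r (X ^ k) = (Lc e N (X ^ k) *\<^sub>v v) $ r" by (rule phi_Lc[OF vc r(1), symmetric])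
    also have "\<dots> = (Lc e N X ^\<^sub>m k *\<^sub>v v) $ r" by (simp add: Lc_pow[OF e])
    also have "\<dots> = (lam ^ k \<cdot>\<^sub>v v) $ r" using eigenvector_pow[OF Lc_carrier v] by simp
    also have "\<dots> = lam ^ k * v $ r" using vc r by simp
    finally show ?thesis .
  qed
  let ?n = "degree P"
  have expand: "poly (map_poly of_int P) x = (\<Sum>i\<le>?n. of_int (coeff P i) * x ^ i)" for x :: "'r::comm_ring_1"
    by (simp add: poly_altdef deg_map_monic[OF P(1)] coeff_map_poly)
  have "0 = phi e N v r (poly (map_poly of_int P) X)" using P(2) by (simp add: phi_zero)
  also have "\<dots> = (\<Sum>i\<le>?n. of_int (coeff P i) * phi e N v r (X ^ i))"
    unfolding expand phi_sum phi_smult ..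
  also have "\<dots> = (\<Sum>i\<le>?n. of_int (coeff P i) * lam ^ i) * v $ r"
    by (simp add: pw sum_distrib_right mult.assoc)
  also have "\<dots> = poly (map_poly of_int P) lam * v $ r" by (simp add: expand)
  finally show ?thesis using r(2) by simp
qed


lemma zint_algebraic_int: "zint (c::complex) \<Longrightarrow> algebraic_int c"
proof -
  assume "zint c"
  then obtain P where P: "monic P" "poly (map_poly of_int P) c = 0" by (auto simp: zint_def)
  have "lead_coeff (map_poly (of_int::int\<Rightarrow>complex) P) = 1"
    using P(1) by (simp add: deg_map_monic coeff_map_poly)
  moreover have "\<forall>i. coeff (map_poly (of_int::int\<Rightarrow>complex) P) i \<in> \<int>"
    by (simp add: coeff_map_poly)
  ultimately show ?thesis using P(2) by (intro algebraic_int.intros) auto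
qed

lemma zint_trace:
  assumes X: "zint (X::'g::{finite,ab_group_add} qg)"
  shows "of_nat (card (UNIV::'g set)) * rep X 0 \<in> \<int>"
proof -
  define N where "N = card (UNIV::'g set)"
  have N: "N > 0" unfolding N_def by (simp add: finite_UNIV_card_ge_0)
  obtain e where e: "bij_betw e {0..<N} (UNIV::'g set)"
    using ex_bij_betw_nat_finite[of "UNIV::'g set"] by (auto simp: N_def)
  obtain P where P: "monic P" "poly (map_poly of_int P) X = 0" using X by (auto simp: zint_def)
  define A where "A = Lc e N X"
  have A: "A \<in> carrier_mat N N" by (simp add: A_def Lc_carrier)
  obtain as where as: "char_poly A = (\<Prod>a\<leftarrow>as. [:- a, 1:])" "length as = N"
    using char_poly_factorized[OF A] by blast
  have zas: "zint a" if a: "a \<in> set as" for a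
  proof -
    have "poly (char_poly A) a = 0" unfolding as(1) using a
      by (induction as) (auto simp: poly_prod_list)
    then have "eigenvalue A a" using eigenvalue_root_char_poly[OF A] by simp
    then have "poly (map_poly of_int P) a = 0" using eigen_root[OF e P] by (simp add: A_def)
    then show ?thesis using P(1) by (auto simp: zint_def)
  qed
  have zsum: "zint (sum_list as)"
    unfolding sum_list_sum_nth by (rule zint_sum) (use zas in auto)
  have "- sum_list as = coeff (char_poly A) (N - 1)"
    using coeff_prod_list_lin[of as] as N by auto
  also have "\<dots> = - (\<Sum>i<N. A $$ (i,i))" by (rule coeff_char_poly_trace[OF A N])
  also have "(\<Sum>i<N. A $$ (i,i)) = (\<Sum>i<N. of_rat (rep X 0))"
    by (rule sum.cong) (auto simp: A_def Lc_def)
  also have "\<dots> = of_rat (of_nat N * rep X 0)" by (simp add: of_rat_mult)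
  finally have eq: "sum_list as = of_rat (of_nat N * rep X 0)" by simp
  have "algebraic_int (sum_list as)" using zsum by (rule zint_algebraic_int)
  moreover have "sum_list as \<in> \<rat>" unfolding eq by (rule Rats_of_rat)
  ultimately have "sum_list as \<in> \<int>" by (rule rational_algebraic_int_is_int)
  then obtain k where "of_rat (of_nat N * rep X 0) = (of_int k :: complex)"
    unfolding eq by (auto elim: Ints_cases)
  then have "of_nat N * rep X 0 = of_int k"
    by (metis of_rat_of_int_eq of_rat_eq_iff)
  then show ?thesis by (simp add: N_def)
qed


definition delta :: "'g \<Rightarrow> 'g \<Rightarrow> rat" where "delta h = (\<lambda>y. if y = h then 1 else 0)"

lemma R_add: "f \<in> int_group_ring \<Longrightarrow> g \<in> int_group_ring \<Longrightarrow> f + g \<in> int_group_ring"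
  by (auto simp: int_group_ring_def)
lemma R_uminus: "f \<in> int_group_ring \<Longrightarrow> - f \<in> int_group_ring"
  by (auto simp: int_group_ring_def)
lemma R_zero: "0 \<in> int_group_ring" by (auto simp: int_group_ring_def)
lemma R_gconv: "f \<in> int_group_ring \<Longrightarrow> g \<in> int_group_ring \<Longrightarrow> gconv f g \<in> int_group_ring"
  by (auto simp: int_group_ring_def gconv_def intro!: Ints_sum Ints_mult)
lemma R_gone: "gone \<in> int_group_ring" by (auto simp: int_group_ring_def gone_def)
lemma R_delta: "delta h \<in> int_group_ring" by (auto simp: int_group_ring_def delta_def)
lemma R_scal: "(\<lambda>g. of_int k * gone g) \<in> int_group_ring" by (auto simp: int_group_ring_def gone_def)
lemma R_smult: "f \<in> int_group_ring \<Longrightarrow> (\<lambda>y. of_int k * f y) \<in> int_group_ring"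
  by (auto simp: int_group_ring_def)

lemma sum_fun_apply': "(\<Sum>h\<in>A. f h) y = (\<Sum>h\<in>A. f h y :: 'b::comm_monoid_add)"
  by (induction A rule: infinite_finite_induct) auto

lemma rep_Abs[simp]: "rep (Abs f) = f" by (simp add: Abs_inverse)

lemma Abs_eqI: "rep X = f \<Longrightarrow> Abs f = X"
  by (metis rep_inverse)

lemma delta0: "delta 0 = gone" by (simp add: delta_def gone_def)

lemma R_expand:
  assumes r: "(r::'g::{finite,ab_group_add} \<Rightarrow> rat) \<in> int_group_ring"
  shows "Abs r = (\<Sum>h\<in>UNIV. of_int \<lfloor>r h\<rfloor> * Abs (delta h))"
proof -
  have "rep (\<Sum>h\<in>UNIV. of_int \<lfloor>r h\<rfloor> * Abs (delta h)) = (\<Sum>h\<in>UNIV. (\<lambda>y. of_int \<lfloor>r h\<rfloor> * delta h y))"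
    by (simp add: rep_sum rep_of_int_mult)
  also have "\<dots> = r"
  proof (rule ext)
    fix y
    have "(\<Sum>h\<in>UNIV. (\<lambda>y. of_int \<lfloor>r h\<rfloor> * delta h y)) y = (\<Sum>h\<in>UNIV. of_int \<lfloor>r h\<rfloor> * delta h y)"
      by (rule sum_fun_apply')
    also have "\<dots> = (\<Sum>h\<in>UNIV. if h = y then of_int \<lfloor>r h\<rfloor> else 0)"
      by (rule sum.cong) (auto simp: delta_def)
    also have "\<dots> = of_int \<lfloor>r y\<rfloor>" by (simp add: sum.delta')
    also have "\<dots> = r y" using r by (auto simp: int_group_ring_def)
    finally show "(\<Sum>h\<in>UNIV. (\<lambda>y. of_int \<lfloor>r h\<rfloor> * delta h y)) y = r y" .
  qed
  finally show ?thesis by (rule Abs_eqI)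
qed

lemma integral_over_imp_zint:
  assumes "integral_over int_group_ring (x::'g::{finite,ab_group_add} \<Rightarrow> rat)"
  shows "zint (Abs x)"
proof -
  obtain n c where c: "\<forall>i<n. c i \<in> int_group_ring"
    and eq: "gpow x n + (\<Sum>i<n. gconv (c i) (gpow x i)) = 0"
    using assms by (auto simp: integral_over_def)
  define X where "X = Abs x"
  define C where "C i = Abs (c i)" for i
  have "rep (X ^ n + (\<Sum>i<n. C i * X ^ i)) = rep 0"
    using eq by (simp add: X_def C_def rep_add rep_power rep_sum rep_mult rep_zero)
  then have eqX: "X ^ n = - (\<Sum>i<n. C i * X ^ i)"
    by (simp add: rep_inject eq_neg_iff_add_eq_0)
  have n: "n > 0"
  proof (rule ccontr)
    assume "\<not> n > 0"
    then have "gone = (0::'g \<Rightarrow> rat)" using eq by simp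
    then show False using gone_ne_zero by blast
  qed
  define D where "D h = (Abs (delta h) :: 'g qg)" for h :: 'g
  define W where "W = (\<lambda>(h,i). D h * X ^ i) ` (UNIV \<times> {..<n})"
  have fW: "finite W" by (simp add: W_def)
  have gen: "D h * X ^ i \<in> zspan W" if "i < n" for h i
    using that by (intro zspan_gen fW) (auto simp: W_def)
  have D0: "D 0 = 1"
    unfolding D_def delta0 by (rule Abs_eqI) (simp add: rep_one)
  have one: "1 \<in> W" using n unfolding W_def by (auto intro!: image_eqI[of _ _ "(0,0)"] simp: D0)
  have st: "X * (D h * X ^ i) \<in> zspan W" if i: "i < n" for h i
  proof (cases "Suc i < n")
    case True then show ?thesis using gen[OF True] by (simp add: algebra_simps)
  next
    case False
    then have si: "Suc i = n" using i by simp
    have "X * (D h * X ^ i) = D h * X ^ n" by (simp add: si[symmetric] algebra_simps)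
    also have "\<dots> = of_int (-1) * (\<Sum>k<n. (D h * C k) * X ^ k)"
      by (simp add: eqX sum_distrib_left algebra_simps sum_negf)
    also have "\<dots> \<in> zspan W"
    proof (intro zspan_smult zspan_sum)
      fix k assume k: "k \<in> {..<n}"
      have r: "gconv (delta h) (c k) \<in> int_group_ring" using c k by (auto intro: R_gconv R_delta)
      have "D h * C k = Abs (gconv (delta h) (c k))"
        unfolding D_def C_def by (rule Abs_eqI[symmetric]) (simp add: rep_mult)
      also have "\<dots> = (\<Sum>g\<in>UNIV. of_int \<lfloor>gconv (delta h) (c k) g\<rfloor> * D g)"
        unfolding D_def by (rule R_expand[OF r])
      finally have "D h * C k * X ^ k = (\<Sum>g\<in>UNIV. of_int \<lfloor>gconv (delta h) (c k) g\<rfloor> * (D g * X ^ k))"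
        by (simp add: sum_distrib_right mult.assoc)
      also have "\<dots> \<in> zspan W" using k by (intro zspan_sum zspan_smult gen) auto
      finally show "D h * C k * X ^ k \<in> zspan W" .
    qed
    finally show ?thesis .
  qed
  have "\<forall>w\<in>W. X * w \<in> zspan W" using st by (auto simp: W_def)
  then have "zint X" using det_trick[OF fW one] by blast
  then show ?thesis by (simp add: X_def)
qed

lemma zint_imp_integral_over:
  assumes "zint (Abs (x::'g::{finite,ab_group_add} \<Rightarrow> rat))"
  shows "integral_over int_group_ring x"
proof -
  obtain P where P: "monic P" "poly (map_poly of_int P) (Abs x) = 0" using assms by (auto simp: zint_def)
  define n where "n = degree P"
  define c where "c i = rep (of_int (coeff P i) :: 'g qg)" for i
  have cR: "\<forall>i<n. c i \<in> int_group_ring" by (simp add: c_def rep_of_int R_scal)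
  have "Abs x ^ n = - (\<Sum>i<n. of_int (coeff P i) * Abs x ^ i)"
    unfolding n_def by (rule zint_power_reduce[OF P])
  then have "Abs x ^ n + (\<Sum>i<n. of_int (coeff P i) * Abs x ^ i) = 0" by simp
  then have "rep (Abs x ^ n + (\<Sum>i<n. of_int (coeff P i) * Abs x ^ i)) = rep 0" by simp
  then have "gpow x n + (\<Sum>i<n. gconv (c i) (gpow x i)) = 0"
    by (simp add: rep_add rep_power rep_sum rep_mult rep_zero c_def)
  then show ?thesis using cR unfolding integral_over_def by blast
qed

lemma S_iff: "x \<in> integral_closure int_group_ring \<longleftrightarrow> zint (Abs (x::'g::{finite,ab_group_add} \<Rightarrow> rat))"
  unfolding integral_closure_def using integral_over_imp_zint zint_imp_integral_over by blast


abbreviation SS :: "('g::{finite,ab_group_add} \<Rightarrow> rat) set" where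
  "SS \<equiv> integral_closure int_group_ring"

lemma S_add: "x \<in> SS \<Longrightarrow> y \<in> SS \<Longrightarrow> x + y \<in> SS"
proof -
  assume "x \<in> SS" "y \<in> SS"
  then have "zint (Abs x + Abs y)" by (simp add: S_iff zint_add)
  moreover have "Abs x + Abs y = Abs (x + y)" by (rule Abs_eqI[symmetric]) (simp add: rep_add)
  ultimately show ?thesis by (simp add: S_iff)
qed

lemma S_gconv: "x \<in> SS \<Longrightarrow> y \<in> SS \<Longrightarrow> gconv x y \<in> SS"
proof -
  assume "x \<in> SS" "y \<in> SS"
  then have "zint (Abs x * Abs y)" by (simp add: S_iff zint_mult)
  moreover have "Abs x * Abs y = Abs (gconv x y)" by (rule Abs_eqI[symmetric]) (simp add: rep_mult)
  ultimately show ?thesis by (simp add: S_iff)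
qed

lemma R_sub_S: "(r::'g::{finite,ab_group_add} \<Rightarrow> rat) \<in> int_group_ring \<Longrightarrow> r \<in> SS"
proof -
  assume r: "r \<in> int_group_ring"
  have g1: "gpow r 1 = r" using gconv_gone_right[of r] by simp
  have g2: "(\<Sum>i<1. gconv ((\<lambda>i. - r) i) (gpow r i)) = gconv (- r) gone" by simp
  have "gpow r 1 + (\<Sum>i<1. gconv ((\<lambda>i. - r) i) (gpow r i)) = 0"
    unfolding g1 g2 gconv_gone_right by simp
  moreover have "\<forall>i<1. (\<lambda>i. - r) i \<in> int_group_ring" using r by (simp add: R_uminus)
  ultimately have "integral_over int_group_ring r" unfolding integral_over_def
    by (intro exI[of _ 1] exI[of _ "\<lambda>i. - r"] conjI)
  then show ?thesis by (simp add: integral_closure_def)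
qed

lemma gconv_scal_left: "gconv (\<lambda>y. a * f y) h = (\<lambda>z. a * gconv f (h::'g::{finite,ab_group_add} \<Rightarrow> rat) z)"
  by (rule ext) (simp add: gconv_def sum_distrib_left mult.assoc)

lemma gconv_scal_right: "gconv f (\<lambda>y. a * h y) = (\<lambda>z. a * gconv f (h::'g::{finite,ab_group_add} \<Rightarrow> rat) z)"
  by (rule ext) (simp add: gconv_def sum_distrib_left mult.left_commute)

lemma S_smult: "x \<in> SS \<Longrightarrow> (\<lambda>y. of_int k * x y) \<in> SS"
proof -
  assume x: "x \<in> SS"
  have "gconv (\<lambda>g. of_int k * gone g) x \<in> SS"
    by (rule S_gconv[OF R_sub_S[OF R_scal] x])
  then show ?thesis by (simp add: gconv_scal)
qed

lemma S_trace:
  assumes x: "(x::'g::{finite,ab_group_add} \<Rightarrow> rat) \<in> SS"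
  shows "of_nat (card (UNIV::'g set)) * x g \<in> \<int>"
proof -
  have "gconv x (delta (- g)) \<in> SS" by (rule S_gconv[OF x R_sub_S[OF R_delta]])
  then have "zint (Abs (gconv x (delta (- g))))" by (simp add: S_iff)
  then have "of_nat (card (UNIV::'g set)) * rep (Abs (gconv x (delta (- g)))) 0 \<in> \<int>"
    by (rule zint_trace)
  moreover have "gconv x (delta (- g)) 0 = x g"
  proof -
    have "gconv x (delta (- g)) 0 = (\<Sum>y\<in>UNIV. if y = g then x y else 0)"
      unfolding gconv_def delta_def by (rule sum.cong) (auto simp: minus_equation_iff)
    then show ?thesis by (simp add: sum.delta')
  qed
  ultimately show ?thesis by simp
qed

lemma S_NR: "(x::'g::{finite,ab_group_add} \<Rightarrow> rat) \<in> SS \<Longrightarrow> (\<lambda>y. of_nat (card (UNIV::'g set)) * x y) \<in> int_group_ring"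
proof -
  assume x: "x \<in> SS"
  show ?thesis unfolding int_group_ring_def using S_trace[OF x] by simp
qed

lemma S_conductor:
  assumes x: "(x::'g::{finite,ab_group_add} \<Rightarrow> rat) \<in> SS"
  shows "(\<lambda>y. of_nat (card (UNIV::'g set) ^ 2) * x y) \<in> conductor SS int_group_ring"
proof -
  define N where "N = card (UNIV::'g set)"
  have "(\<lambda>y. of_int (int (N ^ 2)) * x y) \<in> SS" by (rule S_smult[OF x])
  then have inS: "(\<lambda>y. of_nat (N ^ 2) * x y) \<in> SS" by simp
  have "gconv (\<lambda>y. of_nat (N ^ 2) * x y) t \<in> int_group_ring" if t: "t \<in> SS" for t
  proof -
    have "gconv (\<lambda>y. of_nat N * x y) (\<lambda>y. of_nat N * t y) \<in> int_group_ring"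
      using S_NR[OF x] S_NR[OF t] by (intro R_gconv) (simp_all add: N_def)
    moreover have "gconv (\<lambda>y. of_nat N * x y) (\<lambda>y. of_nat N * t y) = gconv (\<lambda>y. of_nat (N ^ 2) * x y) t"
      by (simp add: gconv_scal_left gconv_scal_right power2_eq_square mult.assoc)
    ultimately show ?thesis by simp
  qed
  then show ?thesis using inS unfolding conductor_def N_def by simp
qed


lemma T_zero: "0 \<in> tensor_sub A B"
  unfolding tensor_sub_def
  by (rule CollectI, rule exI[of _ 0], rule exI[of _ 0]) (auto intro!: exI)

lemma T_elem: "f \<in> A \<Longrightarrow> h \<in> B \<Longrightarrow> gtens f h \<in> tensor_sub A B"
  unfolding tensor_sub_def
  by (rule CollectI, rule exI[of _ 1], rule exI[of _ "\<lambda>i. 1"], rule exI[of _ "\<lambda>i. f"],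
      rule exI[of _ "\<lambda>i. h"]) auto

lemma sum_lessThan_add_split: "(\<Sum>i<n1 + (n2::nat). g i) = (\<Sum>i<n1. g i) + (\<Sum>i<n2. g (n1 + i))"
  by (induction n2) (auto simp: add.assoc)

lemma T_add:
  assumes "x \<in> tensor_sub A B" "y \<in> tensor_sub A B"
  shows "x + y \<in> tensor_sub A B"
proof -
  obtain n1 k1 f1 h1 where 1: "x = (\<Sum>i<(n1::nat). (\<lambda>p. of_int (k1 i) * gtens (f1 i) (h1 i) p))"
    "\<forall>i<n1. f1 i \<in> A \<and> h1 i \<in> B"
    using assms(1) unfolding tensor_sub_def by blast
  obtain n2 k2 f2 h2 where 2: "y = (\<Sum>i<(n2::nat). (\<lambda>p. of_int (k2 i) * gtens (f2 i) (h2 i) p))"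
    "\<forall>i<n2. f2 i \<in> A \<and> h2 i \<in> B"
    using assms(2) unfolding tensor_sub_def by blast
  define k where "k i = (if i < n1 then k1 i else k2 (i - n1))" for i
  define f where "f i = (if i < n1 then f1 i else f2 (i - n1))" for i
  define h where "h i = (if i < n1 then h1 i else h2 (i - n1))" for i
  have "x + y = (\<Sum>i<n1 + n2. (\<lambda>p. of_int (k i) * gtens (f i) (h i) p))"
    unfolding sum_lessThan_add_split 1 2 k_def f_def h_def by simp
  moreover have "\<forall>i<n1 + n2. f i \<in> A \<and> h i \<in> B"
    using 1(2) 2(2) by (auto simp: f_def h_def)
  ultimately show ?thesis unfolding tensor_sub_def by blast
qed

lemma T_smult:
  assumes "x \<in> tensor_sub A B"
  shows "(\<lambda>p. of_int c * x p) \<in> tensor_sub A B"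
proof -
  obtain n k f h where 1: "x = (\<Sum>i<(n::nat). (\<lambda>p. of_int (k i) * gtens (f i) (h i) p))"
    "\<forall>i<n. f i \<in> A \<and> h i \<in> B"
    using assms(1) unfolding tensor_sub_def by blast
  have "(\<lambda>p. of_int c * x p) = (\<Sum>i<n. (\<lambda>p. of_int (c * k i) * gtens (f i) (h i) p))"
    unfolding 1 by (rule ext) (simp add: sum_fun_apply' sum_distrib_left mult.assoc)
  then show ?thesis using 1(2) unfolding tensor_sub_def
    by (intro CollectI exI[of _ n] exI[of _ "\<lambda>i. c * k i"] exI[of _ f] exI[of _ h]) simp
qed

lemma T_sum: "(\<And>i. i \<in> I \<Longrightarrow> g i \<in> tensor_sub A B) \<Longrightarrow> sum g I \<in> tensor_sub A B"
  by (induction I rule: infinite_finite_induct) (auto intro: T_add T_zero)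

lemma T_mono: "A \<subseteq> A' \<Longrightarrow> B \<subseteq> B' \<Longrightarrow> tensor_sub A B \<subseteq> tensor_sub A' B'"
  unfolding tensor_sub_def by blast

lemma T_int:
  assumes "x \<in> tensor_sub (int_group_ring::('a::{finite,ab_group_add} \<Rightarrow> rat) set) (int_group_ring::('b::{finite,ab_group_add} \<Rightarrow> rat) set)"
  shows "x p \<in> \<int>"
proof -
  obtain n k f h where 1: "x = (\<Sum>i<(n::nat). (\<lambda>p. of_int (k i) * gtens (f i) (h i) p))"
    "\<forall>i<n. f i \<in> int_group_ring \<and> h i \<in> int_group_ring"
    using assms(1) unfolding tensor_sub_def by blast
  show ?thesis unfolding 1 sum_fun_apply'
    using 1(2) by (intro Ints_sum) (auto simp: gtens_def int_group_ring_def split: prod.split)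
qed


lemma sum_UNIV_pair: "(\<Sum>y\<in>(UNIV::('a::finite \<times> 'b::finite) set). F y) = (\<Sum>y1\<in>UNIV. \<Sum>y2\<in>UNIV. F (y1, y2))"
  by (simp add: sum.cartesian_product UNIV_Times_UNIV[symmetric] del: UNIV_Times_UNIV)

lemma gconv_gtens:
  "gconv (gtens f h) (gtens u v) =
   gtens (gconv (f::'a::{finite,ab_group_add} \<Rightarrow> rat) u) (gconv (h::'b::{finite,ab_group_add} \<Rightarrow> rat) v)"
proof (rule ext)
  fix p :: "'a \<times> 'b"
  obtain a b where p: "p = (a, b)" by (cases p)
  have "gconv (gtens f h) (gtens u v) (a, b) = (\<Sum>y1\<in>UNIV. \<Sum>y2\<in>UNIV. (f y1 * u (a - y1)) * (h y2 * v (b - y2)))"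
    by (simp add: gconv_def sum_UNIV_pair gtens_def algebra_simps)
  also have "\<dots> = gtens (gconv f u) (gconv h v) (a, b)"
    by (simp add: gtens_def gconv_def sum_product)
  finally show "gconv (gtens f h) (gtens u v) p = gtens (gconv f u) (gconv h v) p" by (simp add: p)
qed

lemma gconv_sum_left: "gconv (sum g I) t = (\<Sum>i\<in>I. gconv (g i) (t::'g::{finite,ab_group_add} \<Rightarrow> rat))"
proof (induction I rule: infinite_finite_induct)
  case (infinite A) then show ?case by (simp only: sum.infinite[OF infinite] gconv_zero_left)
next
  case empty then show ?case by (simp only: sum.empty gconv_zero_left)
next
  case (insert a A) then show ?case by (simp only: sum.insert[OF insert(1,2)] gconv_add_left insert(3))
qed

lemma gconv_sum_right: "gconv t (sum g I) = (\<Sum>i\<in>I. gconv (t::'g::{finite,ab_group_add} \<Rightarrow> rat) (g i))"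
proof (induction I rule: infinite_finite_induct)
  case (infinite A) then show ?case by (simp only: sum.infinite[OF infinite] gconv_zero_right)
next
  case empty then show ?case by (simp only: sum.empty gconv_zero_right)
next
  case (insert a A) then show ?case by (simp only: sum.insert[OF insert(1,2)] gconv_add_right insert(3))
qed

lemma S_zero: "(0::'g::{finite,ab_group_add} \<Rightarrow> rat) \<in> SS"
  by (rule R_sub_S[OF R_zero])

lemma S_sum: "(\<And>i. i \<in> I \<Longrightarrow> g i \<in> SS) \<Longrightarrow> sum g I \<in> (SS::('g::{finite,ab_group_add} \<Rightarrow> rat) set)"
  by (induction I rule: infinite_finite_induct) (auto intro: S_add S_zero)

lemma conductor_sub: "conductor S R \<subseteq> S" by (auto simp: conductor_def)

lemma incl_easy:
  fixes x :: "'a::{finite,ab_group_add} \<times> 'b::{finite,ab_group_add} \<Rightarrow> rat"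
  assumes x: "x \<in> tensor_sub (conductor (SS::('a \<Rightarrow> rat) set) int_group_ring) (conductor (SS::('b \<Rightarrow> rat) set) int_group_ring)"
  shows "x \<in> conductor (tensor_sub (SS::('a \<Rightarrow> rat) set) (SS::('b \<Rightarrow> rat) set)) (tensor_sub int_group_ring int_group_ring)"
proof -
  have xS: "x \<in> tensor_sub (SS::('a \<Rightarrow> rat) set) (SS::('b \<Rightarrow> rat) set)"
    using x T_mono[OF conductor_sub conductor_sub] by blast
  obtain n k f h where 1: "x = (\<Sum>i<(n::nat). (\<lambda>p. of_int (k i) * gtens (f i) (h i) p))"
    "\<forall>i<n. f i \<in> conductor (SS::('a \<Rightarrow> rat) set) int_group_ring \<and> h i \<in> conductor (SS::('b \<Rightarrow> rat) set) int_group_ring"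
    using x unfolding tensor_sub_def by blast
  have "gconv x t \<in> tensor_sub int_group_ring int_group_ring"
    if t: "t \<in> tensor_sub (SS::('a \<Rightarrow> rat) set) (SS::('b \<Rightarrow> rat) set)" for t
  proof -
    obtain m l u v where 2: "t = (\<Sum>j<(m::nat). (\<lambda>p. of_int (l j) * gtens (u j) (v j) p))"
      "\<forall>j<m. u j \<in> (SS::('a \<Rightarrow> rat) set) \<and> v j \<in> (SS::('b \<Rightarrow> rat) set)"
      using t unfolding tensor_sub_def by blast
    have "gconv x t = (\<Sum>i<n. \<Sum>j<m. (\<lambda>p. of_int (k i * l j) * gtens (gconv (f i) (u j)) (gconv (h i) (v j)) p))"
      unfolding 1(1) 2(1) gconv_sum_left gconv_sum_right gconv_scal_left gconv_scal_right gconv_gtens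
      by (rule ext) (simp add: sum_fun_apply' sum_distrib_left algebra_simps, rule sum.swap)
    also have "\<dots> \<in> tensor_sub int_group_ring int_group_ring"
    proof (intro T_sum T_smult T_elem)
      fix i j assume ij: "i \<in> {..<n}" "j \<in> {..<m}"
      show "gconv (f i) (u j) \<in> int_group_ring" using 1(2) 2(2) ij by (auto simp: conductor_def)
      show "gconv (h i) (v j) \<in> int_group_ring" using 1(2) 2(2) ij by (auto simp: conductor_def)
    qed
    finally show ?thesis .
  qed
  then show ?thesis using xS unfolding conductor_def by blast
qed


lemma slice_left:
  fixes x :: "'a::{finite,ab_group_add} \<times> 'b::{finite,ab_group_add} \<Rightarrow> rat"
  shows "gconv x (gtens gone t) (g, b) = gconv (\<lambda>b. x (g, b)) t b"
proof -
  have "gconv x (gtens gone t) (g, b) = (\<Sum>y1\<in>UNIV. \<Sum>y2\<in>UNIV. x (y1, y2) * (gone (g - y1) * t (b - y2)))"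
    by (simp add: gconv_def sum_UNIV_pair gtens_def)
  also have "\<dots> = (\<Sum>y1\<in>UNIV. if y1 = g then (\<Sum>y2\<in>UNIV. x (y1, y2) * t (b - y2)) else 0)"
    by (rule sum.cong) (auto simp: gone_def)
  also have "\<dots> = gconv (\<lambda>b. x (g, b)) t b" by (simp add: sum.delta' gconv_def)
  finally show ?thesis .
qed

lemma slice_right:
  fixes x :: "'a::{finite,ab_group_add} \<times> 'b::{finite,ab_group_add} \<Rightarrow> rat"
  shows "gconv x (gtens t gone) (a, g) = gconv (\<lambda>a. x (a, g)) t a"
proof -
  have "gconv x (gtens t gone) (a, g) = (\<Sum>y1\<in>UNIV. \<Sum>y2\<in>UNIV. x (y1, y2) * (t (a - y1) * gone (g - y2)))"
    by (simp add: gconv_def sum_UNIV_pair gtens_def)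
  also have "\<dots> = (\<Sum>y1\<in>UNIV. x (y1, g) * t (a - y1))"
  proof (rule sum.cong[OF refl])
    fix y1
    have "(\<Sum>y2\<in>UNIV. x (y1, y2) * (t (a - y1) * gone (g - y2))) = (\<Sum>y2\<in>UNIV. if y2 = g then x (y1, y2) * t (a - y1) else 0)"
      by (rule sum.cong) (auto simp: gone_def)
    then show "(\<Sum>y2\<in>UNIV. x (y1, y2) * (t (a - y1) * gone (g - y2))) = x (y1, g) * t (a - y1)"
      by (simp add: sum.delta')
  qed
  also have "\<dots> = gconv (\<lambda>a. x (a, g)) t a" by (simp add: gconv_def)
  finally show ?thesis .
qed

lemma tensor_rep_apply:
  "(\<Sum>i<(n::nat). (\<lambda>p. of_int (k i) * gtens (f i) (h i) p)) (a, b) = (\<Sum>i<n. of_int (k i) * f i a * h i b)"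
  by (simp add: sum_fun_apply' gtens_def mult.assoc)

lemma left_part:
  fixes x :: "'a::{finite,ab_group_add} \<times> 'b::{finite,ab_group_add} \<Rightarrow> rat"
  assumes x: "x \<in> conductor (tensor_sub (SS::('a \<Rightarrow> rat) set) (SS::('b \<Rightarrow> rat) set)) (tensor_sub int_group_ring int_group_ring)"
  shows "(\<lambda>p. of_nat (card (UNIV::'a set) ^ 3) * x p) \<in> tensor_sub (conductor (SS::('a \<Rightarrow> rat) set) int_group_ring) (conductor (SS::('b \<Rightarrow> rat) set) int_group_ring)"
proof -
  define N where "N = card (UNIV::'a set)"
  have xS: "x \<in> tensor_sub (SS::('a \<Rightarrow> rat) set) (SS::('b \<Rightarrow> rat) set)"
    and xC: "\<And>t. t \<in> tensor_sub (SS::('a \<Rightarrow> rat) set) (SS::('b \<Rightarrow> rat) set) \<Longrightarrow> gconv x t \<in> tensor_sub int_group_ring int_group_ring"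
    using x unfolding conductor_def by auto
  obtain n k f h where 1: "x = (\<Sum>i<(n::nat). (\<lambda>p. of_int (k i) * gtens (f i) (h i) p))"
    "\<forall>i<n. f i \<in> (SS::('a \<Rightarrow> rat) set) \<and> h i \<in> (SS::('b \<Rightarrow> rat) set)"
    using xS unfolding tensor_sub_def by blast
  define z where "z g = (\<lambda>b. of_nat N * x (g, b))" for g
  have zS: "z g \<in> (SS::('b \<Rightarrow> rat) set)" for g
  proof -
    have int: "of_nat N * f i g = of_int \<lfloor>of_nat N * f i g\<rfloor>" if "i < n" for i
      using S_trace[of "f i" g] 1(2) that by (simp add: N_def)
    have "z g = (\<Sum>i<n. (\<lambda>b. of_int (k i * \<lfloor>of_nat N * f i g\<rfloor>) * h i b))"
    proof (rule ext)
      fix b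
      have "z g b = (\<Sum>i<n. of_int (k i) * (of_nat N * f i g) * h i b)"
        by (simp add: z_def 1(1) tensor_rep_apply sum_distrib_left algebra_simps)
      also have "\<dots> = (\<Sum>i<n. of_int (k i * \<lfloor>of_nat N * f i g\<rfloor>) * h i b)"
        by (rule sum.cong) (use int in auto)
      finally show "z g b = (\<Sum>i<n. (\<lambda>b. of_int (k i * \<lfloor>of_nat N * f i g\<rfloor>) * h i b)) b"
        by (simp add: sum_fun_apply')
    qed
    also have "\<dots> \<in> SS" using 1(2) by (intro S_sum S_smult) auto
    finally show ?thesis .
  qed
  have zI: "z g \<in> conductor (SS::('b \<Rightarrow> rat) set) int_group_ring" for g
  proof -
    have "gconv (z g) t \<in> int_group_ring" if t: "t \<in> (SS::('b \<Rightarrow> rat) set)" for t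
    proof -
      have "gtens gone t \<in> tensor_sub (SS::('a \<Rightarrow> rat) set) (SS::('b \<Rightarrow> rat) set)"
        by (rule T_elem[OF R_sub_S[OF R_gone] t])
      then have "gconv x (gtens gone t) \<in> tensor_sub int_group_ring int_group_ring" by (rule xC)
      then have "gconv x (gtens gone t) (g, b) \<in> \<int>" for b by (rule T_int)
      then have "gconv (\<lambda>b. x (g, b)) t b \<in> \<int>" for b by (simp add: slice_left)
      moreover have "gconv (z g) t = (\<lambda>b. of_nat N * gconv (\<lambda>b. x (g, b)) t b)"
        unfolding z_def by (rule gconv_scal_left)
      ultimately show ?thesis by (auto simp: int_group_ring_def)
    qed
    then show ?thesis using zS unfolding conductor_def by blast
  qed
  have dI: "(\<lambda>y. of_nat (N ^ 2) * delta g y) \<in> conductor (SS::('a \<Rightarrow> rat) set) int_group_ring" for g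
    unfolding N_def by (rule S_conductor[OF R_sub_S[OF R_delta]])
  have eq: "(\<lambda>p. of_nat (N ^ 3) * x p) = (\<Sum>g\<in>UNIV. (\<lambda>p. of_int 1 * gtens (\<lambda>y. of_nat (N ^ 2) * delta g y) (z g) p))"
  proof (rule ext)
    fix p :: "'a \<times> 'b"
    obtain a b where p: "p = (a, b)" by (cases p)
    have "(\<Sum>g\<in>UNIV. (\<lambda>p. of_int 1 * gtens (\<lambda>y. of_nat (N ^ 2) * delta g y) (z g) p)) (a, b)
        = (\<Sum>g\<in>UNIV. if g = a then of_nat (N ^ 2) * z g b else 0)"
      unfolding sum_fun_apply' by (rule sum.cong) (auto simp: gtens_def delta_def)
    also have "\<dots> = of_nat (N ^ 3) * x (a, b)"
      by (simp add: sum.delta' z_def power_numeral_reduce)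
    finally show "of_nat (N ^ 3) * x p = (\<Sum>g\<in>UNIV. (\<lambda>p. of_int 1 * gtens (\<lambda>y. of_nat (N ^ 2) * delta g y) (z g) p)) p"
      by (simp add: p)
  qed
  have "(\<lambda>p. of_nat (N ^ 3) * x p) \<in> tensor_sub (conductor (SS::('a \<Rightarrow> rat) set) int_group_ring) (conductor (SS::('b \<Rightarrow> rat) set) int_group_ring)"
    unfolding eq by (intro T_sum T_smult T_elem dI zI)
  then show ?thesis by (simp add: N_def)
qed


lemma right_part:
  fixes x :: "'a::{finite,ab_group_add} \<times> 'b::{finite,ab_group_add} \<Rightarrow> rat"
  assumes x: "x \<in> conductor (tensor_sub (SS::('a \<Rightarrow> rat) set) (SS::('b \<Rightarrow> rat) set)) (tensor_sub int_group_ring int_group_ring)"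
  shows "(\<lambda>p. of_nat (card (UNIV::'b set) ^ 3) * x p) \<in> tensor_sub (conductor (SS::('a \<Rightarrow> rat) set) int_group_ring) (conductor (SS::('b \<Rightarrow> rat) set) int_group_ring)"
proof -
  define N where "N = card (UNIV::'b set)"
  have xS: "x \<in> tensor_sub (SS::('a \<Rightarrow> rat) set) (SS::('b \<Rightarrow> rat) set)"
    and xC: "\<And>t. t \<in> tensor_sub (SS::('a \<Rightarrow> rat) set) (SS::('b \<Rightarrow> rat) set) \<Longrightarrow> gconv x t \<in> tensor_sub int_group_ring int_group_ring"
    using x unfolding conductor_def by auto
  obtain n k f h where 1: "x = (\<Sum>i<(n::nat). (\<lambda>p. of_int (k i) * gtens (f i) (h i) p))"
    "\<forall>i<n. f i \<in> (SS::('a \<Rightarrow> rat) set) \<and> h i \<in> (SS::('b \<Rightarrow> rat) set)"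
    using xS unfolding tensor_sub_def by blast
  define z where "z g = (\<lambda>a. of_nat N * x (a, g))" for g
  have zS: "z g \<in> (SS::('a \<Rightarrow> rat) set)" for g
  proof -
    have int: "of_nat N * h i g = of_int \<lfloor>of_nat N * h i g\<rfloor>" if "i < n" for i
      using S_trace[of "h i" g] 1(2) that by (simp add: N_def)
    have "z g = (\<Sum>i<n. (\<lambda>a. of_int (k i * \<lfloor>of_nat N * h i g\<rfloor>) * f i a))"
    proof (rule ext)
      fix a
      have "z g a = (\<Sum>i<n. of_int (k i) * (of_nat N * h i g) * f i a)"
        by (simp add: z_def 1(1) tensor_rep_apply sum_distrib_left algebra_simps)
      also have "\<dots> = (\<Sum>i<n. of_int (k i * \<lfloor>of_nat N * h i g\<rfloor>) * f i a)"
        by (rule sum.cong) (use int in auto)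
      finally show "z g a = (\<Sum>i<n. (\<lambda>a. of_int (k i * \<lfloor>of_nat N * h i g\<rfloor>) * f i a)) a"
        by (simp add: sum_fun_apply')
    qed
    also have "\<dots> \<in> SS" using 1(2) by (intro S_sum S_smult) auto
    finally show ?thesis .
  qed
  have zI: "z g \<in> conductor (SS::('a \<Rightarrow> rat) set) int_group_ring" for g
  proof -
    have "gconv (z g) t \<in> int_group_ring" if t: "t \<in> (SS::('a \<Rightarrow> rat) set)" for t
    proof -
      have "gtens t gone \<in> tensor_sub (SS::('a \<Rightarrow> rat) set) (SS::('b \<Rightarrow> rat) set)"
        by (rule T_elem[OF t R_sub_S[OF R_gone]])
      then have "gconv x (gtens t gone) \<in> tensor_sub int_group_ring int_group_ring" by (rule xC)
      then have "gconv x (gtens t gone) (a, g) \<in> \<int>" for a by (rule T_int)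
      then have "gconv (\<lambda>a. x (a, g)) t a \<in> \<int>" for a by (simp add: slice_right)
      moreover have "gconv (z g) t = (\<lambda>a. of_nat N * gconv (\<lambda>a. x (a, g)) t a)"
        unfolding z_def by (rule gconv_scal_left)
      ultimately show ?thesis by (auto simp: int_group_ring_def)
    qed
    then show ?thesis using zS unfolding conductor_def by blast
  qed
  have dI: "(\<lambda>y. of_nat (N ^ 2) * delta g y) \<in> conductor (SS::('b \<Rightarrow> rat) set) int_group_ring" for g
    unfolding N_def by (rule S_conductor[OF R_sub_S[OF R_delta]])
  have eq: "(\<lambda>p. of_nat (N ^ 3) * x p) = (\<Sum>g\<in>UNIV. (\<lambda>p. of_int 1 * gtens (z g) (\<lambda>y. of_nat (N ^ 2) * delta g y) p))"
  proof (rule ext)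
    fix p :: "'a \<times> 'b"
    obtain a b where p: "p = (a, b)" by (cases p)
    have "(\<Sum>g\<in>UNIV. (\<lambda>p. of_int 1 * gtens (z g) (\<lambda>y. of_nat (N ^ 2) * delta g y) p)) (a, b)
        = (\<Sum>g\<in>UNIV. if g = b then of_nat (N ^ 2) * z g a else 0)"
      unfolding sum_fun_apply' by (rule sum.cong) (auto simp: gtens_def delta_def mult.commute)
    also have "\<dots> = of_nat (N ^ 3) * x (a, b)"
      by (simp add: sum.delta' z_def power_numeral_reduce)
    finally show "of_nat (N ^ 3) * x p = (\<Sum>g\<in>UNIV. (\<lambda>p. of_int 1 * gtens (z g) (\<lambda>y. of_nat (N ^ 2) * delta g y) p)) p"
      by (simp add: p)
  qed
  have "(\<lambda>p. of_nat (N ^ 3) * x p) \<in> tensor_sub (conductor (SS::('a \<Rightarrow> rat) set) int_group_ring) (conductor (SS::('b \<Rightarrow> rat) set) int_group_ring)"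
    unfolding eq by (intro T_sum T_smult T_elem zI dI)
  then show ?thesis by (simp add: N_def)
qed



theorem mainTheorem12:
  fixes p q e f :: nat
  assumes "prime p" and "prime q" and "p \<noteq> q"
    and "card (UNIV :: ('a::{finite,ab_group_add}) set) = p ^ e"
    and "card (UNIV :: ('b::{finite,ab_group_add}) set) = q ^ f"
  shows "conductor
           (tensor_sub (integral_closure (int_group_ring :: ('a \<Rightarrow> rat) set))
                       (integral_closure (int_group_ring :: ('b \<Rightarrow> rat) set)))
           (tensor_sub (int_group_ring :: ('a \<Rightarrow> rat) set) (int_group_ring :: ('b \<Rightarrow> rat) set))
       = tensor_sub
           (conductor (integral_closure (int_group_ring :: ('a \<Rightarrow> rat) set)) int_group_ring)
           (conductor (integral_closure (int_group_ring :: ('b \<Rightarrow> rat) set)) int_group_ring)"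
proof (intro equalityI subsetI)
  fix x
  assume "x \<in> tensor_sub (conductor (integral_closure (int_group_ring :: ('a \<Rightarrow> rat) set)) int_group_ring)
           (conductor (integral_closure (int_group_ring :: ('b \<Rightarrow> rat) set)) int_group_ring)"
  then show "x \<in> conductor
           (tensor_sub (integral_closure (int_group_ring :: ('a \<Rightarrow> rat) set))
                       (integral_closure (int_group_ring :: ('b \<Rightarrow> rat) set)))
           (tensor_sub (int_group_ring :: ('a \<Rightarrow> rat) set) (int_group_ring :: ('b \<Rightarrow> rat) set))"
    by (rule incl_easy)
next
  fix x
  assume x: "x \<in> conductor
           (tensor_sub (integral_closure (int_group_ring :: ('a \<Rightarrow> rat) set))
                       (integral_closure (int_group_ring :: ('b \<Rightarrow> rat) set)))
           (tensor_sub (int_group_ring :: ('a \<Rightarrow> rat) set) (int_group_ring :: ('b \<Rightarrow> rat) set))"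
  define N1 where "N1 = card (UNIV :: 'a set)"
  define N2 where "N2 = card (UNIV :: 'b set)"
  let ?T = "tensor_sub
           (conductor (integral_closure (int_group_ring :: ('a \<Rightarrow> rat) set)) int_group_ring)
           (conductor (integral_closure (int_group_ring :: ('b \<Rightarrow> rat) set)) int_group_ring)"
  have A1: "(\<lambda>p. of_nat (N1 ^ 3) * x p) \<in> ?T" unfolding N1_def by (rule left_part[OF x])
  have A2: "(\<lambda>p. of_nat (N2 ^ 3) * x p) \<in> ?T" unfolding N2_def by (rule right_part[OF x])
  have cpq: "coprime p q" using primes_coprime[OF assms(1,2,3)] .
  have cop: "coprime (N1 ^ 3) (N2 ^ 3)"
    using cpq by (simp add: N1_def N2_def assms(4,5) power_mult[symmetric])
  have "gcd (int (N1 ^ 3)) (int (N2 ^ 3)) = 1"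
    using cop by (simp add: coprime_iff_gcd_eq_1 gcd_int_int_eq)
  then obtain u v where uv: "u * int (N1 ^ 3) + v * int (N2 ^ 3) = 1"
    using bezout_int[of "int (N1 ^ 3)" "int (N2 ^ 3)"] by auto
  have "x = (\<lambda>p. of_int u * (\<lambda>p. of_nat (N1 ^ 3) * x p) p) + (\<lambda>p. of_int v * (\<lambda>p. of_nat (N2 ^ 3) * x p) p)"
  proof (rule ext)
    fix p
    have "(of_int u * of_nat (N1 ^ 3) + of_int v * of_nat (N2 ^ 3) :: rat) = of_int (u * int (N1 ^ 3) + v * int (N2 ^ 3))"
      by simp
    also have "\<dots> = 1" by (simp only: uv of_int_1)
    finally have "(of_int u * of_nat (N1 ^ 3) + of_int v * of_nat (N2 ^ 3) :: rat) = 1" .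
    then have "x p = (of_int u * of_nat (N1 ^ 3) + of_int v * of_nat (N2 ^ 3)) * x p" by simp
    then show "x p = ((\<lambda>p. of_int u * (\<lambda>p. of_nat (N1 ^ 3) * x p) p) + (\<lambda>p. of_int v * (\<lambda>p. of_nat (N2 ^ 3) * x p) p)) p"
      by (simp add: algebra_simps)
  qed
  also have "\<dots> \<in> ?T" by (intro T_add T_smult A1 A2)
  finally show "x \<in> ?T" .
qed


end
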